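(* For every $\alpha\in[m,M]$ (where $m=\inf_{n\ge1}b_n$, $M=\sup_{n\ge1}b_n$), the level set $S_\alpha=\{x>0:\lambda(x)=\alpha\}$ has Lebesgue measure zero.
   Context: Fix integers $p\ge 3$ and $2\le s<p$, and a set $A\subset\{0,1,\dots,p-1\}$ with $\#A=s$. Let $h:\{0,1,\dots,s-1\}\to A$ be the unique strictly increasing bijection. For a positive integer $n$ with base-$s$ expansion $n=\sum_{i=0}^k\varepsilon_i s^i$ ($\varepsilon_i\in\{0,\dots,s-1\}$, $\varepsilon_k\ne 0$), put $a_n=\sum_{i=0}^k h(\varepsilon_i)p^i$, and put $a_0=h(0)$. Let $b_n=a_n/n^{\log_s p}$ for $n\ge1$. For real $x\ge0$ let $a(x)=a_{\lfloor x\rfloor}$, and for $x>0$ let $\lambda(x)=\lim_{k\to\infty}\frac{a(s^kx)}{(s^kx)^{\log_s p}}$ (this limit exists). *)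

theory Defs
  imports "HOL-Analysis.Analysis"
begin

definition digit_map :: "nat set \<Rightarrow> nat \<Rightarrow> nat" where
  "digit_map A i = sorted_list_of_set A ! i"

text \<open>a_n: replace base-s digits eps_i of n by h(eps_i) and read in base p; a_0 = h 0.\<close>
function a_seq :: "nat \<Rightarrow> nat \<Rightarrow> nat set \<Rightarrow> nat \<Rightarrow> nat" where
  "a_seq p s A n =
     (if n < s \<or> s < 2 then digit_map A n
      else digit_map A (n mod s) + p * a_seq p s A (n div s))"
  by auto
termination
  by (relation "Wellfounded.measure (\<lambda>(p, s, A, n). n)") auto

definition b_seq :: "nat \<Rightarrow> nat \<Rightarrow> nat set \<Rightarrow> nat \<Rightarrow> real" where
  "b_seq p s A n = real (a_seq p s A n) / (real n) powr (log (real s) (real p))"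

definition a_fun :: "nat \<Rightarrow> nat \<Rightarrow> nat set \<Rightarrow> real \<Rightarrow> real" where
  "a_fun p s A x = real (a_seq p s A (nat \<lfloor>x\<rfloor>))"

definition lambda_fun :: "nat \<Rightarrow> nat \<Rightarrow> nat set \<Rightarrow> real \<Rightarrow> real" where
  "lambda_fun p s A x =
     lim (\<lambda>k. a_fun p s A (real s ^ k * x) / (real s ^ k * x) powr (log (real s) (real p)))"

end

theory Submission
  imports Defs
begin


declare a_seq.simps[simp del]

locale LS =
  fixes p s :: nat and A :: "nat set"
  assumes p3: "p \<ge> 3" and s2: "2 \<le> s" and sp: "s < p"
    and Asub: "A \<subseteq> {0..<p}" and cardA: "card A = s"
begin

definition c :: real where "c = log (real s) (real p)"

lemma finA: "finite A" using Asub finite_subset by blast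

lemma h_lt: "i < s \<Longrightarrow> digit_map A i < p"
proof -
  assume i: "i < s"
  have "digit_map A i \<in> set (sorted_list_of_set A)"
    unfolding digit_map_def using i cardA finA by (intro nth_mem) simp
  then show ?thesis using finA Asub by auto
qed

lemma h_mono: "i < j \<Longrightarrow> j < s \<Longrightarrow> digit_map A i < digit_map A j"
  unfolding digit_map_def
  using sorted_wrt_nth_less[OF strict_sorted_list_of_set[of A], of i j] cardA finA by simp

lemma a_rec: "s \<le> n \<Longrightarrow> a_seq p s A n = digit_map A (n mod s) + p * a_seq p s A (n div s)"
  by (subst a_seq.simps) (use s2 in auto)

lemma a_small: "n < s \<Longrightarrow> a_seq p s A n = digit_map A n"
  by (subst a_seq.simps) auto

lemma a_pos: "1 \<le> n \<Longrightarrow> 1 \<le> a_seq p s A n"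
proof (induction n rule: less_induct)
  case (less n)
  show ?case
  proof (cases "n < s")
    case True
    then have "digit_map A 0 < digit_map A n" using less.prems h_mono by auto
    then show ?thesis using True a_small by simp
  next
    case False
    have "s div s \<le> n div s" by (rule div_le_mono) (use False in simp)
    then have "1 \<le> n div s" using s2 by simp
    moreover have "n div s < n" using s2 less.prems by simp
    ultimately have "1 \<le> a_seq p s A (n div s)" using less.IH by blast
    then have "1 \<le> p * a_seq p s A (n div s)" using p3 by simp
    then show ?thesis using False a_rec[of n] by linarith
  qed
qed

lemma floor_div: assumes "0 \<le> (y::real)" shows "nat \<lfloor>real s * y\<rfloor> div s = nat \<lfloor>y\<rfloor>"
proof (rule div_nat_eqI)
  define q where "q = nat \<lfloor>y\<rfloor>"
  have q1: "real q \<le> y" using assms q_def by simp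
  have q2: "y < real q + 1" using assms q_def by linarith
  have "real (s * q) \<le> real s * y" using q1 by (simp add: mult_left_mono)
  then show "s * nat \<lfloor>y\<rfloor> \<le> nat \<lfloor>real s * y\<rfloor>" unfolding q_def[symmetric] by (rule le_nat_floor)
  have "real s * y < real s * (real q + 1)" using q2 s2 by (intro mult_strict_left_mono) auto
  then have "real s * y < real (s * Suc q)" by (simp add: algebra_simps)
  then show "nat \<lfloor>real s * y\<rfloor> < s * Suc (nat \<lfloor>y\<rfloor>)" unfolding q_def[symmetric]
    using assms by (simp add: nat_less_iff floor_less_iff)
qed

lemma spow_c: "(real s ^ k) powr c = real p ^ k"
proof -
  have "(real s ^ k) powr c = (real s powr real k) powr c" using s2 by (simp add: powr_realpow)
  also have "\<dots> = (real s powr c) powr real k" by (simp add: powr_powr mult.commute)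
  also have "real s powr c = real p" unfolding c_def using s2 sp by simp
  also have "real p powr real k = real p ^ k" using p3 by (simp add: powr_realpow)
  finally show ?thesis .
qed

lemma c_ge1: "c \<ge> 1" unfolding c_def using s2 sp by simp

end


lemma powr_diff_ge:
  fixes u x c :: real
  assumes "1 \<le> u" "u \<le> x" "1 \<le> c"
  shows "x - u \<le> x powr c - u powr c"
proof -
  define r where "r = x / u"
  have r1: "1 \<le> r" using assms unfolding r_def by simp
  have xr: "x = u * r" using assms unfolding r_def by simp
  have "r \<le> r powr c" using powr_mono[OF assms(3) r1] r1 by simp
  have "u \<le> u powr c" using powr_mono[OF assms(3) assms(1)] assms by simp
  have "x powr c = u powr c * r powr c" using xr assms r1 by (simp add: powr_mult)
  then have "x powr c - u powr c = u powr c * (r powr c - 1)" by (simp add: algebra_simps)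
  also have "\<dots> \<ge> u powr c * (r - 1)" using \<open>r \<le> r powr c\<close> by (intro mult_left_mono) auto
  also have "u powr c * (r - 1) \<ge> u * (r - 1)" using \<open>u \<le> u powr c\<close> r1 by (intro mult_right_mono) auto
  also have "u * (r - 1) = x - u" using xr by (simp add: algebra_simps)
  finally show ?thesis by simp
qed

lemma aux_frac: "0 < (q::real) \<Longrightarrow> 0 < P \<Longrightarrow> 1 / q - (P - 1) / (P * q) = 1 / (P * q)"
  by (simp add: field_simps)

lemma aux_frac2: "0 < (P::real) \<Longrightarrow> 0 < Q \<Longrightarrow> (H + P * a) / (P * Q) = a / Q + H / (P * Q)"
  by (simp add: field_simps)

context LS begin

definition nn :: "real \<Rightarrow> nat \<Rightarrow> nat" where "nn x k = nat \<lfloor>real s ^ k * x\<rfloor>"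
definition tt :: "real \<Rightarrow> nat \<Rightarrow> real" where "tt x k = real (a_seq p s A (nn x k)) / real p ^ k"

lemma nn_ge: "1 \<le> x \<Longrightarrow> s ^ k \<le> nn x k"
  unfolding nn_def by (rule le_nat_floor) (metis mult.right_neutral mult_left_mono zero_le_power of_nat_0_le_iff of_nat_power)

lemma nn_lt: "x < real s \<Longrightarrow> 0 \<le> x \<Longrightarrow> nn x k < s ^ Suc k"
proof -
  assume "x < real s" "0 \<le> x"
  then have "real s ^ k * x < real s ^ k * real s" using s2 by (intro mult_strict_left_mono) auto
  then have "real s ^ k * x < real (s ^ Suc k)" by (simp add: algebra_simps)
  then show ?thesis unfolding nn_def using \<open>0 \<le> x\<close> by (simp add: nat_less_iff floor_less_iff)
qed

lemma nn_Suc_div: "0 \<le> x \<Longrightarrow> nn x (Suc k) div s = nn x k"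
proof -
  assume "0 \<le> x"
  have "real s ^ Suc k * x = real s * (real s ^ k * x)" by simp
  then show ?thesis unfolding nn_def using floor_div[of "real s ^ k * x"] \<open>0 \<le> x\<close> by (simp add: mult.assoc)
qed

lemma tt_step: assumes "1 \<le> x"
  shows "tt x (Suc k) = tt x k + real (digit_map A (nn x (Suc k) mod s)) / real p ^ Suc k"
proof -
  have "s \<le> s ^ Suc k" using s2 by simp
  also have "\<dots> \<le> nn x (Suc k)" using nn_ge assms by blast
  finally have "s \<le> nn x (Suc k)" .
  then have "a_seq p s A (nn x (Suc k)) = digit_map A (nn x (Suc k) mod s) + p * a_seq p s A (nn x k)"
    using a_rec nn_Suc_div assms by simp
  then have "real (a_seq p s A (nn x (Suc k))) = real (digit_map A (nn x (Suc k) mod s)) + real p * real (a_seq p s A (nn x k))"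
    by simp
  moreover have "real p ^ Suc k = real p * real p ^ k" by simp
  ultimately show ?thesis unfolding tt_def using aux_frac2[of "real p" "real p ^ k"] p3 by simp
qed

lemma tt_bounds: assumes "1 \<le> x"
  shows "tt x k \<le> tt x (k + i) \<and> tt x (k + i) \<le> tt x k + 1 / real p ^ k - 1 / real p ^ (k + i)"
proof (induction i)
  case 0 then show ?case by simp
next
  case (Suc i)
  define d where "d = real (digit_map A (nn x (Suc (k + i)) mod s)) / real p ^ Suc (k + i)"
  have st: "tt x (k + Suc i) = tt x (k + i) + d" using tt_step[OF assms] d_def by simp
  have d0: "0 \<le> d" unfolding d_def by simp
  have "digit_map A (nn x (Suc (k + i)) mod s) < p" using h_lt s2 by simp
  then have "real (digit_map A (nn x (Suc (k + i)) mod s)) \<le> real p - 1" by linarith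
  then have d1: "d \<le> (real p - 1) / real p ^ Suc (k + i)" unfolding d_def
    by (intro divide_right_mono) auto
  have e: "1 / real p ^ (k + i) - (real p - 1) / real p ^ Suc (k + i) = 1 / real p ^ (k + Suc i)"
  proof -
    have q0: "0 < real p ^ (k + i)" using p3 by simp
    have "1 / real p ^ (k + i) - (real p - 1) / (real p * real p ^ (k + i)) = 1 / (real p * real p ^ (k + i))"
      using aux_frac[OF q0, of "real p"] p3 by simp
    then show ?thesis by simp
  qed
  show ?case using Suc.IH st d0 d1 e by linarith
qed

lemma lam_seq: assumes "0 < x"
  shows "a_fun p s A (real s ^ k * x) / (real s ^ k * x) powr log (real s) (real p) = tt x k / x powr c"
proof -
  have "(real s ^ k * x) powr c = (real s ^ k) powr c * x powr c" using assms by (simp add: powr_mult)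
  also have "\<dots> = real p ^ k * x powr c" by (simp add: spow_c)
  finally have "(real s ^ k * x) powr log (real s) (real p) = real p ^ k * x powr c" unfolding c_def .
  then show ?thesis unfolding a_fun_def tt_def nn_def by simp
qed

lemma lam_bounds: assumes "1 \<le> x"
  shows "tt x k / x powr c \<le> lambda_fun p s A x \<and> lambda_fun p s A x \<le> (tt x k + 1 / real p ^ k) / x powr c"
proof -
  define X where "X = (\<lambda>k. tt x k / x powr c)"
  have xc: "0 < x powr c" using assms by simp
  have lf: "lambda_fun p s A x = lim X"
    unfolding lambda_fun_def X_def using lam_seq assms by simp
  have inc: "incseq X"
  proof (rule incseq_SucI)
    fix n show "X n \<le> X (Suc n)" unfolding X_def using tt_bounds[OF assms, of n 1] xc
      by (simp add: divide_right_mono)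
  qed
  have bnd: "\<forall>i. X i \<le> (tt x 0 + 1) / x powr c"
  proof
    fix i
    have "0 \<le> 1 / real p ^ i" by simp
    moreover have "tt x i \<le> tt x 0 + 1 - 1 / real p ^ i" using tt_bounds[OF assms, of 0 i] by simp
    ultimately have "tt x i \<le> tt x 0 + 1" by linarith
    then show "X i \<le> (tt x 0 + 1) / x powr c" unfolding X_def using xc by (simp add: divide_right_mono)
  qed
  obtain L where L: "X \<longlonglongrightarrow> L" "\<forall>i. X i \<le> L" using incseq_convergent[OF inc bnd] by blast
  have "lim X = L" using L(1) by (rule limI)
  moreover have "L \<le> (tt x k + 1 / real p ^ k) / x powr c"
  proof (rule LIMSEQ_le_const2[OF L(1)])
    show "\<exists>N. \<forall>n\<ge>N. X n \<le> (tt x k + 1 / real p ^ k) / x powr c"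
    proof (intro exI allI impI)
      fix n assume "k \<le> n"
      then obtain i where n: "n = k + i" using le_Suc_ex by blast
      have "0 \<le> 1 / real p ^ (k + i)" by simp
      then have "tt x (k + i) \<le> tt x k + 1 / real p ^ k" using tt_bounds[OF assms, of k i] by linarith
      then have "tt x n \<le> tt x k + 1 / real p ^ k" using n by simp
      then show "X n \<le> (tt x k + 1 / real p ^ k) / x powr c" unfolding X_def using xc
        by (simp add: divide_right_mono)
    qed
  qed
  ultimately show ?thesis using L(2) lf unfolding X_def by simp
qed

end


context LS begin

lemma alpha_pos: assumes "1 \<le> x" "lambda_fun p s A x = \<alpha>" shows "0 < \<alpha>"
proof -
  have "1 \<le> nn x 0" using nn_ge[OF assms(1), of 0] by simp
  then have "1 \<le> a_seq p s A (nn x 0)" by (rule a_pos)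
  then have "1 \<le> tt x 0" unfolding tt_def by simp
  moreover have "0 < x powr c" using assms by simp
  ultimately have "0 < tt x 0 / x powr c" by simp
  then show ?thesis using lam_bounds[OF assms(1), of 0] assms(2) by linarith
qed

lemma core_null: "negligible {x. 1 \<le> x \<and> x < real s \<and> lambda_fun p s A x = \<alpha>}"
  (is "negligible ?S1")
proof (cases "0 < \<alpha>")
  case False
  then have e: "?S1 = {}" using alpha_pos by force
  show ?thesis by (simp only: e negligible_empty)
next
  case apos: True
  have c0: "0 < c" using c_ge1 by simp
  show ?thesis unfolding negligible_outer_le
  proof (intro allI impI)
    fix e :: real assume e: "0 < e"
    have "real s / real p < 1" using sp by simp
    then obtain k where k: "(real s / real p) ^ k < e * \<alpha> / real s"
      using real_arch_pow_inv[of "e * \<alpha> / real s" "real s / real p"] e apos s2 by auto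
    define \<delta> where "\<delta> = 1 / real p ^ k / \<alpha>"
    define u where "u n = (max (real (a_seq p s A n) / real p ^ k / \<alpha>) 1) powr (1 / c)" for n
    define T where "T = (\<Union>n\<in>{s^k..<s^Suc k}. {u n .. u n + \<delta>})"
    have "?S1 \<subseteq> T"
    proof
      fix x assume "x \<in> ?S1"
      then have x1: "1 \<le> x" and xs: "x < real s" and lx: "lambda_fun p s A x = \<alpha>" by auto
      define n where "n = nn x k"
      have nr: "n \<in> {s^k..<s^Suc k}" unfolding n_def using nn_ge[OF x1] nn_lt[OF xs] x1 by auto
      define y where "y = x powr c"
      have y0: "0 < y" "1 \<le> y" unfolding y_def using x1 c0 by (auto simp: ge_one_powr_ge_zero)
      have lb: "tt x k / y \<le> \<alpha>" and ub: "\<alpha> \<le> (tt x k + 1 / real p ^ k) / y"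
        using lam_bounds[OF x1, of k] lx unfolding y_def by auto
      have "tt x k \<le> \<alpha> * y" using lb y0 by (simp add: divide_le_eq)
      then have l2: "tt x k / \<alpha> \<le> y" using apos by (simp add: divide_le_eq mult.commute)
      have "\<alpha> * y \<le> tt x k + 1 / real p ^ k" using ub y0 by (simp add: le_divide_eq)
      then have "y * \<alpha> \<le> tt x k + 1 / real p ^ k" by (simp add: mult.commute)
      then have "y \<le> (tt x k + 1 / real p ^ k) / \<alpha>" using apos by (simp add: pos_le_divide_eq)
      then have u2: "y \<le> tt x k / \<alpha> + \<delta>" unfolding \<delta>_def by (simp add: add_divide_distrib)
      have tta: "tt x k / \<alpha> = real (a_seq p s A n) / real p ^ k / \<alpha>" unfolding tt_def n_def by simp
      define M where "M = max (real (a_seq p s A n) / real p ^ k / \<alpha>) 1"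
      have M1: "1 \<le> M" and My: "M \<le> y" using l2 tta y0 unfolding M_def by auto
      have un: "u n = M powr (1 / c)" unfolding u_def M_def by simp
      have uc: "u n powr c = M" unfolding un using c0 M1 by (simp add: powr_powr)
      have xy: "x = y powr (1 / c)" unfolding y_def using c0 x1 by (simp add: powr_powr)
      have u1: "1 \<le> u n" unfolding un using M1 c0 by (simp add: ge_one_powr_ge_zero)
      have ux: "u n \<le> x" unfolding un xy using My M1 c0 by (intro powr_mono2) auto
      have "x - u n \<le> x powr c - u n powr c" by (rule powr_diff_ge[OF u1 ux c_ge1])
      also have "\<dots> = y - M" unfolding uc y_def ..
      also have "\<dots> \<le> \<delta>" using u2 tta unfolding M_def by auto
      finally have "x \<le> u n + \<delta>" by simp
      then show "x \<in> T" unfolding T_def using nr ux by auto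
    qed
    moreover have Tm: "T \<in> lmeasurable" unfolding T_def by auto
    moreover have "measure lebesgue T \<le> e"
    proof -
      have d0: "0 \<le> \<delta>" unfolding \<delta>_def using apos by simp
      have "measure lebesgue T \<le> (\<Sum>n\<in>{s^k..<s^Suc k}. measure lebesgue {u n .. u n + \<delta>})"
        unfolding T_def by (rule measure_UNION_le) auto
      also have "\<dots> = (\<Sum>n\<in>{s^k..<s^Suc k}. \<delta>)" using d0 by simp
      also have "\<dots> = real (s^Suc k - s^k) * \<delta>" by simp
      also have "\<dots> \<le> real (s^Suc k) * \<delta>" using d0 by (intro mult_right_mono) (simp only: of_nat_le_iff diff_le_self, simp)
      also have "real (s^Suc k) * \<delta> = real s * (real s / real p) ^ k / \<alpha>"
        unfolding \<delta>_def by (simp add: power_divide)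
      also have "\<dots> \<le> e"
      proof -
        have "real s * (real s / real p) ^ k < real s * (e * \<alpha> / real s)"
          using k s2 by (intro mult_strict_left_mono) auto
        also have "\<dots> = e * \<alpha>" using s2 by simp
        finally show ?thesis using apos by (simp add: divide_le_eq)
      qed
      finally show ?thesis .
    qed
    ultimately show "\<exists>T. ?S1 \<subseteq> T \<and> T \<in> lmeasurable \<and> measure lebesgue T \<le> e" by blast
  qed
qed

lemma lam_scale: "lambda_fun p s A (real s * x) = lambda_fun p s A x"
proof -
  define F where "F k = a_fun p s A (real s ^ k * x) / (real s ^ k * x) powr log (real s) (real p)" for k
  have "lambda_fun p s A (real s * x) = lim (\<lambda>k. F (Suc k))"
    unfolding lambda_fun_def F_def by (simp add: mult.assoc mult.left_commute)
  also have "\<dots> = lim F" unfolding lim_def by (simp add: filterlim_sequentially_Suc)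
  also have "\<dots> = lambda_fun p s A x" unfolding lambda_fun_def F_def ..
  finally show ?thesis .
qed

lemma lam_scale_pow: "lambda_fun p s A (real s ^ m * x) = lambda_fun p s A x"
proof (induction m)
  case (Suc m)
  have e: "real s ^ Suc m * x = real s * (real s ^ m * x)" by simp
  show ?case by (metis e lam_scale Suc.IH)
qed simp

lemma main_null: "negligible {x::real. 0 < x \<and> lambda_fun p s A x = \<alpha>}" (is "negligible ?S")
proof -
  define S1 where "S1 = {x. 1 \<le> x \<and> x < real s \<and> lambda_fun p s A x = \<alpha>}"
  have S1n: "negligible S1" unfolding S1_def by (rule core_null)
  have sub: "?S \<subseteq> (\<Union>m. \<Union>i. (\<lambda>z. z * real s ^ i / real s ^ m) ` S1)"
  proof
    fix x assume "x \<in> ?S"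
    then have x0: "0 < x" and lx: "lambda_fun p s A x = \<alpha>" by auto
    have "1 < real s" using s2 by simp
    then obtain m where m: "1 / x < real s ^ m" using real_arch_pow by blast
    define y where "y = real s ^ m * x"
    have y1: "1 \<le> y" using m x0 unfolding y_def by (simp add: divide_less_eq)
    have ly: "lambda_fun p s A y = \<alpha>" unfolding y_def using lam_scale_pow lx by simp
    obtain j where j: "y < real s ^ j" using real_arch_pow \<open>1 < real s\<close> by blast
    define j0 where "j0 = (LEAST j. y < real s ^ j)"
    have j0a: "y < real s ^ j0" unfolding j0_def using j by (rule LeastI)
    have "j0 \<noteq> 0"
    proof
      assume "j0 = 0" then show False using j0a y1 by simp
    qed
    then obtain i where i: "j0 = Suc i" using not0_implies_Suc by blast
    have "\<not> y < real s ^ i" unfolding j0_def using i not_less_Least[of i "\<lambda>j. y < real s ^ j"]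
      unfolding j0_def by auto
    then have yi: "real s ^ i \<le> y" by simp
    define z where "z = y / real s ^ i"
    have sp0: "0 < real s ^ i" using s2 by simp
    have z1: "1 \<le> z" unfolding z_def using yi sp0 by simp
    have z2: "z < real s" unfolding z_def using j0a i sp0 by (simp add: divide_less_eq mult.commute)
    have yz: "y = real s ^ i * z" unfolding z_def using sp0 by simp
    have lz: "lambda_fun p s A z = \<alpha>" using ly lam_scale_pow[of i z] yz by simp
    have "z \<in> S1" unfolding S1_def using z1 z2 lz by simp
    moreover have "x = z * real s ^ i / real s ^ m"
    proof -
      have pm: "0 < real s ^ m" using s2 by simp
      have "x = (real s ^ m * x) / real s ^ m" using pm by simp
      also have "\<dots> = z * real s ^ i / real s ^ m" using yz unfolding y_def by (simp add: mult.commute)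
      finally show ?thesis .
    qed
    ultimately show "x \<in> (\<Union>m. \<Union>i. (\<lambda>z. z * real s ^ i / real s ^ m) ` S1)" by blast
  qed
  have neg: "negligible (\<Union>m. \<Union>i. (\<lambda>z. z * real s ^ i / real s ^ m) ` S1)"
  proof (intro negligible_Union_nat)
    fix m i
    show "negligible ((\<lambda>z. z * real s ^ i / real s ^ m) ` S1)"
    proof (rule negligible_differentiable_image_negligible[OF _ S1n])
      have eq: "(\<lambda>z. z * real s ^ i / real s ^ m) = (\<lambda>z. z * (real s ^ i / real s ^ m))" by auto
      show "(\<lambda>z. z * real s ^ i / real s ^ m) differentiable_on S1"
        unfolding eq by (rule differentiable_on_mult[OF differentiable_on_ident differentiable_on_const])
    qed simp
  qed
  show ?thesis by (rule negligible_subset[OF neg sub])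
qed

end

theorem mainTheorem13:
  fixes p s :: nat and A :: "nat set" and \<alpha> :: real
  assumes "p \<ge> 3" and "2 \<le> s" and "s < p"
    and "A \<subseteq> {0..<p}" and "card A = s"
    and "(INF n\<in>{1..}. b_seq p s A n) \<le> \<alpha>"
    and "\<alpha> \<le> (SUP n\<in>{1..}. b_seq p s A n)"
  shows "{x::real. 0 < x \<and> lambda_fun p s A x = \<alpha>} \<in> null_sets lebesgue"
proof -
  interpret LS p s A using assms by unfold_locales auto
  show ?thesis using main_null[of \<alpha>] by (simp add: negligible_iff_null_sets)
qed

end
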